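(* Let $\delta_1,\dots,\delta_k$ be positive real numbers and let $\tilde D_1,\dots,\tilde D_k\in M_n(\mathbb{C})$ be such that each $\tilde D_i$ is a $\delta_i$-generalized row stochastic matrix or a $\delta_i$-generalized column stochastic matrix, with $\|\tilde D_i\|_2=\delta_i$. Let $S_k(\tilde D)=\tilde D_1+\cdots+\tilde D_k$ and $\delta=\delta_1+\cdots+\delta_k$. Then $S_k(\tilde D)$ is a $\delta$-generalized doubly stochastic matrix with $\|S_k(\tilde D)\|_2=\delta$, and for every $m\in\mathbb{N}$ and every block structure $\mathbb{B}\subseteq M_n(\mathbb{C})$, $\mu_{\mathbb{B}}(S_k(\tilde D)^m)=\delta^m$.
   Context: A $\delta$-generalized row (resp. column) stochastic matrix is a square complex matrix all of whose row (resp. column) sums equal $\delta$; it is $\delta$-generalized doubly stochastic if both hold. $\|M\|_2$ denotes the spectral norm. A block structure is a set of the form $\mathbb{B}=\{\operatorname{diag}(\delta_1I_{k_1},\dots,\delta_rI_{k_r},\Delta_1,\dots,\Delta_s)\mid \delta_i\in\mathbb{C},\ \Delta_j\in M_{n_j}(\mathbb{C})\}\subseteq M_n(\mathbb{C})$ for some $r,s\in\mathbb{N}_0$ and positive integers $k_i,n_j$ with $\sum k_i+\sum n_j=n$. The structured singular value is $\mu_{\mathbb{B}}(M)=0$ if $\det(I+M\Delta)\neq0$ for all $\Delta\in\mathbb{B}$, and otherwise $\mu_{\mathbb{B}}(M)=\big(\min\{\|\Delta\|_2\mid \Delta\in\mathbb{B},\ \det(I+M\Delta)=0\}\big)^{-1}$.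 *)

theory Defs
  imports "Jordan_Normal_Form.Determinant" Complex_Main
begin

definition vec_norm2 :: "complex vec \<Rightarrow> real" where
  "vec_norm2 v = sqrt (\<Sum>i<dim_vec v. (cmod (v $ i))\<^sup>2)"

definition spec_norm :: "complex mat \<Rightarrow> real" where
  "spec_norm A = Sup {vec_norm2 (A *\<^sub>v v) | v. v \<in> carrier_vec (dim_col A) \<and> vec_norm2 v \<le> 1}"

definition gen_row_stochastic :: "nat \<Rightarrow> complex \<Rightarrow> complex mat \<Rightarrow> bool" where
  "gen_row_stochastic n d A \<longleftrightarrow> A \<in> carrier_mat n n \<and> (\<forall>i<n. (\<Sum>j<n. A $$ (i, j)) = d)"

definition gen_col_stochastic :: "nat \<Rightarrow> complex \<Rightarrow> complex mat \<Rightarrow> bool" where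
  "gen_col_stochastic n d A \<longleftrightarrow> A \<in> carrier_mat n n \<and> (\<forall>j<n. (\<Sum>i<n. A $$ (i, j)) = d)"

definition gen_doubly_stochastic :: "nat \<Rightarrow> complex \<Rightarrow> complex mat \<Rightarrow> bool" where
  "gen_doubly_stochastic n d A \<longleftrightarrow> gen_row_stochastic n d A \<and> gen_col_stochastic n d A"

definition mat_sum :: "nat \<Rightarrow> nat \<Rightarrow> (nat \<Rightarrow> complex mat) \<Rightarrow> complex mat" where
  "mat_sum n k D = mat n n (\<lambda>(i, j). \<Sum>l<k. D l $$ (i, j))"

(* block structure with scalar block sizes ks = [k_1..k_r] and full block sizes ns = [n_1..n_s]:
   diag(delta_1 I_{k_1}, ..., delta_r I_{k_r}, Delta_1, ..., Delta_s) *)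
definition block_structure :: "nat list \<Rightarrow> nat list \<Rightarrow> complex mat set" where
  "block_structure ks ns =
     {diag_block_mat (map (\<lambda>i. \<delta> i \<cdot>\<^sub>m 1\<^sub>m (ks ! i)) [0..<length ks] @ Ds) | \<delta> Ds.
        length Ds = length ns \<and> (\<forall>j<length ns. Ds ! j \<in> carrier_mat (ns ! j) (ns ! j))}"

definition is_block_structure :: "nat \<Rightarrow> nat list \<Rightarrow> nat list \<Rightarrow> bool" where
  "is_block_structure n ks ns \<longleftrightarrow> (\<forall>x\<in>set ks. 0 < x) \<and> (\<forall>x\<in>set ns. 0 < x)
     \<and> sum_list ks + sum_list ns = n"

definition ssv :: "complex mat set \<Rightarrow> complex mat \<Rightarrow> real" where
  "ssv B M = (if (\<forall>\<Delta>\<in>B. det (1\<^sub>m (dim_row M) + M * \<Delta>) \<noteq> 0) then 0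
     else inverse (Inf {spec_norm \<Delta> | \<Delta>. \<Delta> \<in> B \<and> det (1\<^sub>m (dim_row M) + M * \<Delta>) = 0}))"

end

theory Submission imports Defs "HOL-Analysis.L2_Norm" begin


lemma nrm_L2: "vec_norm2 v = L2_set (\<lambda>i. cmod (v $ i)) {..<dim_vec v}"
  by (simp add: vec_norm2_def L2_set_def)

lemma nrm_sq: "(vec_norm2 v)\<^sup>2 = (\<Sum>i<dim_vec v. (cmod (v $ i))\<^sup>2)"
  unfolding vec_norm2_def by (simp add: sum_nonneg)

lemma nrm_smult: "vec_norm2 (c \<cdot>\<^sub>v v) = cmod c * vec_norm2 v"
  unfolding nrm_L2 by (simp add: L2_set_right_distrib norm_mult) (intro L2_set_cong, auto simp: norm_mult)

lemma nrm_uminus: "vec_norm2 (- v) = vec_norm2 v"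
  unfolding nrm_L2 by simp (intro L2_set_cong, auto)

lemma nrm_zero_iff: "vec_norm2 v = 0 \<longleftrightarrow> v = 0\<^sub>v (dim_vec v)"
  unfolding nrm_L2 by (auto simp: L2_set_eq_0_iff intro!: eq_vecI) (metis index_zero_vec(1))


lemma rowv: "i < dim_row A \<Longrightarrow> dim_vec v = dim_col A \<Longrightarrow> (A *\<^sub>v v) $ i = (\<Sum>j<dim_col A. A $$ (i,j) * v $ j)"
  by (simp add: scalar_prod_def lessThan_atLeast0)

lemma bdd: "bdd_above {vec_norm2 (A *\<^sub>v v) | v. v \<in> carrier_vec (dim_col A) \<and> vec_norm2 v \<le> 1}"
proof (rule bdd_aboveI, clarify)
  fix v :: "complex vec" assume v: "v \<in> carrier_vec (dim_col A)" "vec_norm2 v \<le> 1"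
  have vj: "cmod (v $ j) \<le> 1" if "j < dim_col A" for j
  proof -
    have "cmod (v $ j) \<le> vec_norm2 v" unfolding nrm_L2 using v that by (intro member_le_L2_set) auto
    thus ?thesis using v by simp
  qed
  have "vec_norm2 (A *\<^sub>v v) \<le> (\<Sum>i<dim_row A. cmod ((A *\<^sub>v v) $ i))"
    unfolding nrm_L2 dim_mult_mat_vec by (rule L2_set_le_sum) simp
  also have "\<dots> \<le> (\<Sum>i<dim_row A. \<Sum>j<dim_col A. cmod (A $$ (i,j)))"
  proof (rule sum_mono)
    fix i assume i: "i \<in> {..<dim_row A}"
    have "cmod ((A *\<^sub>v v) $ i) = cmod (\<Sum>j<dim_col A. A $$ (i,j) * v $ j)" using i v by (subst rowv) auto
    also have "\<dots> \<le> (\<Sum>j<dim_col A. cmod (A $$ (i,j) * v $ j))" by (rule norm_sum)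
    also have "\<dots> \<le> (\<Sum>j<dim_col A. cmod (A $$ (i,j)))"
      by (rule sum_mono) (use vj in \<open>auto simp: norm_mult intro!: mult_left_le\<close>)
    finally show "cmod ((A *\<^sub>v v) $ i) \<le> (\<Sum>j<dim_col A. cmod (A $$ (i,j)))" .
  qed
  finally show "vec_norm2 (A *\<^sub>v v) \<le> (\<Sum>i<dim_row A. \<Sum>j<dim_col A. cmod (A $$ (i,j)))" .
qed

lemma opb: assumes v: "v \<in> carrier_vec (dim_col A)"
  shows "vec_norm2 (A *\<^sub>v v) \<le> spec_norm A * vec_norm2 v"
proof (cases "vec_norm2 v = 0")
  case True
  hence "v = 0\<^sub>v (dim_col A)" using v nrm_zero_iff by auto
  hence "A *\<^sub>v v = 0\<^sub>v (dim_row A)" by (auto intro!: eq_vecI simp: scalar_prod_def)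
  hence "vec_norm2 (A *\<^sub>v v) = 0" using nrm_zero_iff by auto
  thus ?thesis using True by simp
next
  case False
  define r where "r = vec_norm2 v"
  have r: "r > 0" using False r_def by (simp add: vec_norm2_def sum_nonneg order_less_le)
  define w where "w = complex_of_real (1/r) \<cdot>\<^sub>v v"
  have w: "w \<in> carrier_vec (dim_col A)" "vec_norm2 w = 1" using v r unfolding w_def r_def
    by (auto simp: nrm_smult norm_divide)
  have Aw: "A *\<^sub>v w = complex_of_real (1/r) \<cdot>\<^sub>v (A *\<^sub>v v)"
    unfolding w_def by (rule mult_mat_vec[OF _ v]) auto
  have "vec_norm2 (A *\<^sub>v w) \<le> spec_norm A" unfolding spec_norm_def
    by (rule cSup_upper[OF _ bdd]) (use w in auto)
  hence "vec_norm2 (A *\<^sub>v v) / r \<le> spec_norm A" using r by (simp add: Aw nrm_smult norm_divide)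
  thus ?thesis using r unfolding r_def by (simp add: pos_divide_le_eq)
qed

lemma opb_le: assumes "c \<ge> 0" "\<And>v. v \<in> carrier_vec (dim_col A) \<Longrightarrow> vec_norm2 (A *\<^sub>v v) \<le> c * vec_norm2 v"
  shows "spec_norm A \<le> c"
  unfolding spec_norm_def
proof (rule cSup_least)
  show "{vec_norm2 (A *\<^sub>v v) | v. v \<in> carrier_vec (dim_col A) \<and> vec_norm2 v \<le> 1} \<noteq> {}"
  proof -
    have "0\<^sub>v (dim_col A) \<in> carrier_vec (dim_col A) \<and> vec_norm2 (0\<^sub>v (dim_col A) :: complex vec) \<le> 1"
      by (simp add: vec_norm2_def)
    thus ?thesis by blast
  qed
next
  fix x assume "x \<in> {vec_norm2 (A *\<^sub>v v) | v. v \<in> carrier_vec (dim_col A) \<and> vec_norm2 v \<le> 1}"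
  then obtain v where v: "v \<in> carrier_vec (dim_col A)" "vec_norm2 v \<le> 1" "x = vec_norm2 (A *\<^sub>v v)" by auto
  have "x \<le> c * vec_norm2 v" using assms(2)[OF v(1)] v(3) by simp
  also have "\<dots> \<le> c" using v(2) assms(1) by (simp add: mult_left_le)
  finally show "x \<le> c" .
qed



lemma fin: fixes z :: "nat \<Rightarrow> complex" and d :: real
  assumes s: "(\<Sum>i<n. z i) = of_nat n * of_real d" and q: "(\<Sum>i<n. (cmod (z i))\<^sup>2) \<le> real n * d\<^sup>2"
  shows "\<forall>i<n. z i = of_real d"
proof -
  have e: "(cmod (z i - of_real d))\<^sup>2 = (cmod (z i))\<^sup>2 - 2 * d * Re (z i) + d\<^sup>2" for i
    by (simp only: cmod_power2) (simp add: power2_eq_square algebra_simps)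
  have sr: "(\<Sum>i<n. Re (z i)) = real n * d"
  proof -
    have "(\<Sum>i<n. Re (z i)) = Re (\<Sum>i<n. z i)" by simp
    also have "\<dots> = real n * d" using s by simp
    finally show ?thesis .
  qed
  have "(\<Sum>i<n. (cmod (z i - of_real d))\<^sup>2) = (\<Sum>i<n. (cmod (z i))\<^sup>2) - 2 * d * (\<Sum>i<n. Re (z i)) + real n * d\<^sup>2"
    unfolding e by (simp add: sum.distrib sum_subtractf sum_distrib_left)
  also have "\<dots> \<le> 0" using q sr by (simp add: power2_eq_square algebra_simps)
  finally have le: "(\<Sum>i<n. (cmod (z i - of_real d))\<^sup>2) \<le> 0" .
  have "(\<Sum>i<n. (cmod (z i - of_real d))\<^sup>2) = 0" using le by (simp add: antisym sum_nonneg)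
  hence "\<forall>i\<in>{..<n}. (cmod (z i - of_real d))\<^sup>2 = 0" by (subst (asm) sum_nonneg_eq_0_iff) auto
  thus ?thesis by auto
qed

definition ones :: "nat \<Rightarrow> complex vec" where "ones n = vec n (\<lambda>_. 1)"

lemma ones_norm: "vec_norm2 (ones n) = sqrt (real n)"
  unfolding vec_norm2_def ones_def by simp

lemma ds: fixes A :: "complex mat" and d :: real
  assumes A: "A \<in> carrier_mat n n" and d: "d \<ge> 0" and sn: "spec_norm A \<le> d"
    and tot: "(\<Sum>i<n. \<Sum>j<n. A $$ (i,j)) = of_nat n * of_real d"
  shows "(\<forall>i<n. (\<Sum>j<n. A $$ (i,j)) = of_real d) \<and> (\<forall>j<n. (\<Sum>i<n. A $$ (i,j)) = of_real d)"
proof -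
  have op: "vec_norm2 (A *\<^sub>v v) \<le> d * vec_norm2 v" if "v \<in> carrier_vec n" for v
  proof -
    have "vec_norm2 (A *\<^sub>v v) \<le> spec_norm A * vec_norm2 v" using opb[of v A] that A by auto
    also have "\<dots> \<le> d * vec_norm2 v" using sn by (intro mult_right_mono) (auto simp: vec_norm2_def sum_nonneg)
    finally show ?thesis .
  qed
  show ?thesis
proof
  show "\<forall>i<n. (\<Sum>j<n. A $$ (i,j)) = of_real d"
  proof (rule fin[OF tot])
    have Ae: "(A *\<^sub>v ones n) $ i = (\<Sum>j<n. A $$ (i,j))" if "i < n" for i
      using A that by (subst rowv) (auto simp: ones_def)
    have "(\<Sum>i<n. (cmod (\<Sum>j<n. A $$ (i,j)))\<^sup>2) = (vec_norm2 (A *\<^sub>v ones n))\<^sup>2"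
      unfolding nrm_sq using A by (auto intro!: sum.cong simp del: index_mult_mat_vec simp: Ae)
    also have "\<dots> \<le> (d * sqrt (real n))\<^sup>2"
      using op[of "ones n"] by (intro power_mono) (auto simp: ones_def ones_norm vec_norm2_def sum_nonneg)
    also have "\<dots> = real n * d\<^sup>2" by (simp add: power_mult_distrib)
    finally show "(\<Sum>i<n. (cmod (\<Sum>j<n. A $$ (i,j)))\<^sup>2) \<le> real n * d\<^sup>2" .
  qed
next
  define c where "c j = (\<Sum>i<n. A $$ (i,j))" for j
  define S where "S = (\<Sum>j<n. (cmod (c j))\<^sup>2)"
  have S0: "S \<ge> 0" unfolding S_def by (simp add: sum_nonneg)
  define w where "w = vec n (\<lambda>j. cnj (c j))"
  have w: "w \<in> carrier_vec n" "vec_norm2 w = sqrt S" unfolding w_def S_def vec_norm2_def by auto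
  have Aw: "(A *\<^sub>v w) $ i = (\<Sum>j<n. A $$ (i,j) * cnj (c j))" if "i < n" for i
    using A that by (subst rowv) (auto simp: w_def)
  have "complex_of_real S = (\<Sum>j<n. c j * cnj (c j))"
    unfolding S_def by (simp add: complex_mult_cnj cmod_power2)
  also have "\<dots> = (\<Sum>i<n. (A *\<^sub>v w) $ i)"
    by (simp add: Aw c_def sum_distrib_right) (rule sum.swap)
  finally have "S = cmod (\<Sum>i<n. (A *\<^sub>v w) $ i)" using S0 by (metis norm_of_real abs_of_nonneg)
  also have "\<dots> \<le> (\<Sum>i<n. \<bar>1\<bar> * \<bar>cmod ((A *\<^sub>v w) $ i)\<bar>)" by (simp add: norm_sum)
  also have "\<dots> \<le> L2_set (\<lambda>_. 1) {..<n} * L2_set (\<lambda>i. cmod ((A *\<^sub>v w) $ i)) {..<n}"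
    by (rule L2_set_mult_ineq)
  also have "\<dots> = sqrt (real n) * vec_norm2 (A *\<^sub>v w)"
    using A by (simp add: nrm_L2 L2_set_constant)
  also have "\<dots> \<le> sqrt (real n) * (d * sqrt S)"
    using op[OF w(1)] w(2) by (intro mult_left_mono) auto
  finally have Sle: "S \<le> sqrt (real n) * d * sqrt S" by simp
  have Sq: "S \<le> real n * d\<^sup>2"
  proof (cases "S = 0")
    case True thus ?thesis by simp
  next
    case False
    hence pos: "sqrt S > 0" using S0 by simp
    have "sqrt S * sqrt S \<le> (sqrt (real n) * d) * sqrt S" using Sle S0 by simp
    hence "sqrt S \<le> sqrt (real n) * d" by (rule mult_right_le_imp_le[OF _ pos])
    hence "(sqrt S)\<^sup>2 \<le> (sqrt (real n) * d)\<^sup>2" using pos by (intro power_mono) auto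
    thus ?thesis using S0 by (simp add: power_mult_distrib)
  qed
  have tot2: "(\<Sum>j<n. c j) = of_nat n * of_real d" unfolding c_def using tot by (subst sum.swap) simp
  show "\<forall>j<n. (\<Sum>i<n. A $$ (i,j)) = of_real d"
    using fin[OF tot2, folded S_def, OF Sq] unfolding c_def .
qed
qed



lemma diag_scalar: "diag_block_mat (map (\<lambda>k. c \<cdot>\<^sub>m 1\<^sub>m k) L) = (c::complex) \<cdot>\<^sub>m 1\<^sub>m (sum_list L)"
  by (induction L) (auto intro!: eq_matI simp: Let_def)

lemma map_dims: assumes "length Ds = length ns" "\<forall>j<length ns. Ds ! j \<in> carrier_mat (ns ! j) (ns ! j)"
  shows "map dim_row Ds = ns" "map dim_col Ds = ns"
  using assms by (auto intro!: nth_equalityI)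

lemma block_carrier: assumes "is_block_structure n ks ns" "\<Delta> \<in> block_structure ks ns"
  shows "\<Delta> \<in> carrier_mat n n"
proof -
  obtain \<delta> Ds where D: "\<Delta> = diag_block_mat (map (\<lambda>i. \<delta> i \<cdot>\<^sub>m 1\<^sub>m (ks ! i)) [0..<length ks] @ Ds)"
    "length Ds = length ns" "\<forall>j<length ns. Ds ! j \<in> carrier_mat (ns ! j) (ns ! j)"
    using assms(2) unfolding block_structure_def by blast
  have m: "map (\<lambda>i. ks ! i) [0..<length ks] = ks" by (rule map_nth)
  have "map dim_row (map (\<lambda>i. \<delta> i \<cdot>\<^sub>m 1\<^sub>m (ks ! i)) [0..<length ks]) = ks"
       "map dim_col (map (\<lambda>i. \<delta> i \<cdot>\<^sub>m 1\<^sub>m (ks ! i)) [0..<length ks]) = ks"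
    by (simp_all add: comp_def m)
  thus ?thesis using D map_dims[OF D(2,3)] assms(1) unfolding is_block_structure_def carrier_mat_def
    by (simp add: dim_diag_block_mat)
qed

lemma scalar_in: assumes "is_block_structure n ks ns"
  shows "c \<cdot>\<^sub>m 1\<^sub>m n \<in> block_structure ks ns"
proof -
  define Ds where "Ds = map (\<lambda>j. c \<cdot>\<^sub>m 1\<^sub>m (ns ! j)) [0..<length ns]"
  have eq: "map (\<lambda>i. c \<cdot>\<^sub>m 1\<^sub>m (ks ! i)) [0..<length ks] @ Ds = map (\<lambda>k. c \<cdot>\<^sub>m 1\<^sub>m k) (ks @ ns)"
    unfolding Ds_def by (intro nth_equalityI) (auto simp: nth_append)
  have "diag_block_mat (map (\<lambda>i. c \<cdot>\<^sub>m 1\<^sub>m (ks ! i)) [0..<length ks] @ Ds) = c \<cdot>\<^sub>m 1\<^sub>m (sum_list (ks @ ns))"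
    unfolding eq diag_scalar ..
  hence "c \<cdot>\<^sub>m 1\<^sub>m n = diag_block_mat (map (\<lambda>i. (\<lambda>_. c) i \<cdot>\<^sub>m 1\<^sub>m (ks ! i)) [0..<length ks] @ Ds)"
    using assms unfolding is_block_structure_def by simp
  moreover have "length Ds = length ns \<and> (\<forall>j<length ns. Ds ! j \<in> carrier_mat (ns ! j) (ns ! j))"
    unfolding Ds_def by auto
  ultimately show ?thesis unfolding block_structure_def
    by (intro CollectI exI[of _ "\<lambda>_. c"] exI[of _ Ds]) simp
qed

lemma L2_sum_tri: fixes k :: nat shows "L2_set (\<lambda>i. \<Sum>l<k. f l i) A \<le> (\<Sum>l<k. L2_set (f l) A)"
proof (induction k)
  case 0 thus ?case by (simp add: L2_set_0')
next
  case (Suc k)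
  have "L2_set (\<lambda>i. \<Sum>l<Suc k. f l i) A = L2_set (\<lambda>i. (\<Sum>l<k. f l i) + f k i) A" by simp
  also have "\<dots> \<le> L2_set (\<lambda>i. \<Sum>l<k. f l i) A + L2_set (f k) A" by (rule L2_set_triangle_ineq)
  also have "\<dots> \<le> (\<Sum>l<Suc k. L2_set (f l) A)" using Suc by simp
  finally show ?case .
qed



lemma smult_one_mv: assumes "v \<in> carrier_vec n" shows "((c::complex) \<cdot>\<^sub>m 1\<^sub>m n) *\<^sub>v v = c \<cdot>\<^sub>v v"
proof (rule eq_vecI)
  show "dim_vec ((c \<cdot>\<^sub>m 1\<^sub>m n) *\<^sub>v v) = dim_vec (c \<cdot>\<^sub>v v)" using assms by simp
  fix i assume i: "i < dim_vec (c \<cdot>\<^sub>v v)"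
  hence i': "i < n" using assms by simp
  have "((c \<cdot>\<^sub>m 1\<^sub>m n) *\<^sub>v v) $ i = (\<Sum>j<n. (c \<cdot>\<^sub>m 1\<^sub>m n) $$ (i,j) * v $ j)"
    using assms i' by (subst rowv) auto
  also have "\<dots> = (\<Sum>j<n. (if j = i then c * v $ j else 0))"
    using i' by (intro sum.cong) auto
  also have "\<dots> = c * v $ i" using i' by simp
  finally show "((c \<cdot>\<^sub>m 1\<^sub>m n) *\<^sub>v v) $ i = (c \<cdot>\<^sub>v v) $ i" using i by simp
qed



theorem corollary2p6:
  fixes n k :: nat and \<delta>s :: "nat \<Rightarrow> real" and D :: "nat \<Rightarrow> complex mat"
  assumes "k \<ge> 1"
    and pos: "\<forall>i<k. \<delta>s i > 0"
    and stoch: "\<forall>i<k. gen_row_stochastic n (complex_of_real (\<delta>s i)) (D i)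
                     \<or> gen_col_stochastic n (complex_of_real (\<delta>s i)) (D i)"
    and norms: "\<forall>i<k. spec_norm (D i) = \<delta>s i"
  shows "gen_doubly_stochastic n (complex_of_real (\<Sum>i<k. \<delta>s i)) (mat_sum n k D)
         \<and> spec_norm (mat_sum n k D) = (\<Sum>i<k. \<delta>s i)
         \<and> (\<forall>m ks ns. m \<ge> 1 \<longrightarrow> is_block_structure n ks ns \<longrightarrow>
              ssv (block_structure ks ns) (mat_sum n k D ^\<^sub>m m) = (\<Sum>i<k. \<delta>s i) ^ m)"
proof -
  define d where "d = (\<Sum>i<k. \<delta>s i)"
  define S where "S = mat_sum n k D"
  have Dc: "D l \<in> carrier_mat n n" if "l < k" for l
    using stoch that unfolding gen_row_stochastic_def gen_col_stochastic_def by auto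
  have Sc: "S \<in> carrier_mat n n" by (simp add: S_def mat_sum_def)
  have Sij: "S $$ (i,j) = (\<Sum>l<k. D l $$ (i,j))" if "i < n" "j < n" for i j
    using that by (simp add: S_def mat_sum_def)
  have k0: "0 \<in> {..<k}" using assms(1) by simp
  have dpos: "d > 0" unfolding d_def using k0 pos by (intro sum_pos) auto
  have npos: "n > 0"
  proof (rule ccontr)
    assume "\<not> n > 0" hence n0: "n = 0" by simp
    have "spec_norm (D 0) \<le> 0"
    proof (rule opb_le)
      fix v :: "complex vec" assume "v \<in> carrier_vec (dim_col (D 0))"
      have "dim_row (D 0) = 0" using Dc[of 0] assms(1) n0 by auto
      thus "vec_norm2 (D 0 *\<^sub>v v) \<le> 0 * vec_norm2 v" by (simp add: vec_norm2_def)
    qed simp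
    thus False using norms pos assms(1) by force
  qed
  have Dds: "(\<forall>i<n. (\<Sum>j<n. D l $$ (i,j)) = of_real (\<delta>s l)) \<and> (\<forall>j<n. (\<Sum>i<n. D l $$ (i,j)) = of_real (\<delta>s l))"
    if l: "l < k" for l
  proof (rule ds[OF Dc[OF l]])
    show "0 \<le> \<delta>s l" using pos l by force
    show "spec_norm (D l) \<le> \<delta>s l" using norms l by simp
    show "(\<Sum>i<n. \<Sum>j<n. D l $$ (i, j)) = of_nat n * of_real (\<delta>s l)"
    proof (cases "gen_row_stochastic n (complex_of_real (\<delta>s l)) (D l)")
      case True thus ?thesis unfolding gen_row_stochastic_def by simp
    next
      case False
      hence "gen_col_stochastic n (complex_of_real (\<delta>s l)) (D l)" using stoch l by blast
      hence "(\<Sum>j<n. \<Sum>i<n. D l $$ (i, j)) = of_nat n * of_real (\<delta>s l)"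
        unfolding gen_col_stochastic_def by simp
      thus ?thesis by (subst sum.swap)
    qed
  qed
  have P1: "gen_doubly_stochastic n (complex_of_real d) S"
    unfolding gen_doubly_stochastic_def gen_row_stochastic_def gen_col_stochastic_def
  proof (intro conjI allI impI Sc)
    fix i assume i: "i < n"
    have "(\<Sum>j<n. S $$ (i,j)) = (\<Sum>j<n. \<Sum>l<k. D l $$ (i,j))" using i by (simp add: Sij)
    also have "\<dots> = (\<Sum>l<k. \<Sum>j<n. D l $$ (i,j))" by (rule sum.swap)
    also have "\<dots> = (\<Sum>l<k. of_real (\<delta>s l))" using Dds i by (intro sum.cong) auto
    finally show "(\<Sum>j<n. S $$ (i,j)) = complex_of_real d" by (simp add: d_def)
  next
    fix j assume j: "j < n"
    have "(\<Sum>i<n. S $$ (i,j)) = (\<Sum>i<n. \<Sum>l<k. D l $$ (i,j))" using j by (simp add: Sij)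
    also have "\<dots> = (\<Sum>l<k. \<Sum>i<n. D l $$ (i,j))" by (rule sum.swap)
    also have "\<dots> = (\<Sum>l<k. of_real (\<delta>s l))" using Dds j by (intro sum.cong) auto
    finally show "(\<Sum>i<n. S $$ (i,j)) = complex_of_real d" by (simp add: d_def)
  qed
  have Sop: "vec_norm2 (S *\<^sub>v v) \<le> d * vec_norm2 v" if v: "v \<in> carrier_vec n" for v
  proof -
    have Sv: "(S *\<^sub>v v) $ i = (\<Sum>l<k. (D l *\<^sub>v v) $ i)" if i: "i < n" for i
    proof -
      have "(S *\<^sub>v v) $ i = (\<Sum>j<n. S $$ (i,j) * v $ j)" using Sc v i by (subst rowv) auto
      also have "\<dots> = (\<Sum>j<n. \<Sum>l<k. D l $$ (i,j) * v $ j)" using i by (simp add: Sij sum_distrib_right)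
      also have "\<dots> = (\<Sum>l<k. \<Sum>j<n. D l $$ (i,j) * v $ j)" by (rule sum.swap)
      also have "\<dots> = (\<Sum>l<k. (D l *\<^sub>v v) $ i)" using Dc v i by (intro sum.cong refl, subst rowv) auto
      finally show ?thesis .
    qed
    have "vec_norm2 (S *\<^sub>v v) = L2_set (\<lambda>i. cmod (\<Sum>l<k. (D l *\<^sub>v v) $ i)) {..<n}"
      unfolding nrm_L2 using Sc by (intro L2_set_cong) (auto simp: Sv simp del: index_mult_mat_vec)
    also have "\<dots> \<le> L2_set (\<lambda>i. \<Sum>l<k. cmod ((D l *\<^sub>v v) $ i)) {..<n}"
      by (intro L2_set_mono norm_sum) auto
    also have "\<dots> \<le> (\<Sum>l<k. L2_set (\<lambda>i. cmod ((D l *\<^sub>v v) $ i)) {..<n})" by (rule L2_sum_tri)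
    also have "\<dots> = (\<Sum>l<k. vec_norm2 (D l *\<^sub>v v))" using Dc unfolding nrm_L2 by (intro sum.cong) auto
    also have "\<dots> \<le> (\<Sum>l<k. \<delta>s l * vec_norm2 v)"
    proof (rule sum_mono)
      fix l assume l: "l \<in> {..<k}"
      show "vec_norm2 (D l *\<^sub>v v) \<le> \<delta>s l * vec_norm2 v" using opb[of v "D l"] Dc[of l] l v norms by auto
    qed
    also have "\<dots> = d * vec_norm2 v" by (simp add: d_def sum_distrib_right)
    finally show ?thesis .
  qed
  have Se: "S *\<^sub>v ones n = complex_of_real d \<cdot>\<^sub>v ones n"
  proof (rule eq_vecI)
    fix i assume "i < dim_vec (complex_of_real d \<cdot>\<^sub>v ones n)"
    hence i: "i < n" by (simp add: ones_def)
    have "(S *\<^sub>v ones n) $ i = (\<Sum>j<n. S $$ (i,j))" using Sc i by (subst rowv) (auto simp: ones_def)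
    also have "\<dots> = complex_of_real d" using P1 i unfolding gen_doubly_stochastic_def gen_row_stochastic_def by auto
    finally show "(S *\<^sub>v ones n) $ i = (complex_of_real d \<cdot>\<^sub>v ones n) $ i" using i by (simp add: ones_def)
  qed (use Sc in \<open>simp add: ones_def\<close>)
  have onesc: "ones n \<in> carrier_vec n" by (simp add: ones_def)
  have sqn: "sqrt (real n) > 0" using npos by simp
  have P2: "spec_norm S = d"
  proof (rule antisym)
    show "spec_norm S \<le> d" using Sop Sc dpos by (intro opb_le) auto
    have "vec_norm2 (S *\<^sub>v ones n) \<le> spec_norm S * vec_norm2 (ones n)" using Sc onesc by (intro opb) auto
    hence "d * sqrt (real n) \<le> spec_norm S * sqrt (real n)" using dpos by (simp add: Se nrm_smult ones_norm)
    thus "d \<le> spec_norm S" using sqn by simp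
  qed
  have P3: "ssv (block_structure ks ns) (S ^\<^sub>m m) = d ^ m" if m: "m \<ge> 1" and blk: "is_block_structure n ks ns" for m ks ns
  proof -
    define M where "M = S ^\<^sub>m m"
    have Mc: "M \<in> carrier_mat n n" unfolding M_def using Sc by simp
    have Me: "S ^\<^sub>m j *\<^sub>v ones n = complex_of_real (d ^ j) \<cdot>\<^sub>v ones n" for j
    proof (induction j)
      case 0 thus ?case using Sc onesc by simp
    next
      case (Suc j)
      have "S ^\<^sub>m Suc j *\<^sub>v ones n = S ^\<^sub>m j *\<^sub>v (S *\<^sub>v ones n)"
        unfolding pow_mat.simps(2) using Sc onesc by (intro assoc_mult_mat_vec[of _ n n _ n]) auto
      also have "\<dots> = complex_of_real d \<cdot>\<^sub>v (S ^\<^sub>m j *\<^sub>v ones n)"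
        unfolding Se using Sc onesc by (intro mult_mat_vec) auto
      also have "\<dots> = complex_of_real (d ^ Suc j) \<cdot>\<^sub>v ones n" unfolding Suc
        by (intro eq_vecI) (auto simp: ones_def)
      finally show ?case .
    qed
    have Mop: "vec_norm2 (S ^\<^sub>m j *\<^sub>v v) \<le> d ^ j * vec_norm2 v" if "v \<in> carrier_vec n" for j v
      using that
    proof (induction j arbitrary: v)
      case 0
      have "S ^\<^sub>m 0 *\<^sub>v v = v" using Sc 0 by simp
      thus ?case by simp
    next
      case (Suc j)
      have Svc: "S *\<^sub>v v \<in> carrier_vec n" by (rule mult_mat_vec_carrier[OF Sc Suc.prems])
      have "S ^\<^sub>m Suc j *\<^sub>v v = S ^\<^sub>m j *\<^sub>v (S *\<^sub>v v)"
        unfolding pow_mat.simps(2) using Sc Suc.prems by (intro assoc_mult_mat_vec[of _ n n _ n]) auto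
      hence "vec_norm2 (S ^\<^sub>m Suc j *\<^sub>v v) = vec_norm2 (S ^\<^sub>m j *\<^sub>v (S *\<^sub>v v))" by (rule arg_cong)
      also have "\<dots> \<le> d ^ j * vec_norm2 (S *\<^sub>v v)" using Suc.IH[OF Svc] .
      also have "\<dots> \<le> d ^ j * (d * vec_norm2 v)" using Sop[OF Suc.prems] dpos by (intro mult_left_mono) auto
      finally show ?case by (simp add: mult_ac)
    qed
    define c where "c = - complex_of_real (1 / d ^ m)"
    have cmodc: "cmod c = 1 / d ^ m" using dpos by (simp add: c_def norm_divide norm_power)
    define \<Delta>0 where "\<Delta>0 = c \<cdot>\<^sub>m 1\<^sub>m n"
    have D0B: "\<Delta>0 \<in> block_structure ks ns" unfolding \<Delta>0_def by (rule scalar_in[OF blk])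
    have dimM: "dim_row M = n" using Mc by simp
    have det0: "det (1\<^sub>m (dim_row M) + M * \<Delta>0) = 0"
      unfolding dimM
    proof (subst det_0_iff_vec_prod_zero)
      show "1\<^sub>m n + M * \<Delta>0 \<in> carrier_mat n n" using Mc by (simp add: \<Delta>0_def)
      have ne: "ones n \<noteq> 0\<^sub>v n"
      proof
        assume "ones n = 0\<^sub>v n"
        hence "ones n $ 0 = 0\<^sub>v n $ 0" by simp
        thus False using npos by (simp add: ones_def)
      qed
      have D0c: "\<Delta>0 \<in> carrier_mat n n" by (simp add: \<Delta>0_def)
      have "(1\<^sub>m n + M * \<Delta>0) *\<^sub>v ones n = 1\<^sub>m n *\<^sub>v ones n + (M * \<Delta>0) *\<^sub>v ones n"
        using Mc onesc D0c by (intro add_mult_distrib_mat_vec[of _ n n]) auto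
      also have "\<dots> = ones n + M *\<^sub>v (\<Delta>0 *\<^sub>v ones n)"
        using Mc onesc D0c by (simp only: one_mult_mat_vec[OF onesc] assoc_mult_mat_vec[OF Mc D0c onesc])
      also have "\<dots> = ones n + c \<cdot>\<^sub>v (complex_of_real (d ^ m) \<cdot>\<^sub>v ones n)"
        unfolding \<Delta>0_def smult_one_mv[OF onesc] using Mc onesc
        by (subst mult_mat_vec[of _ n n]) (auto simp: M_def Me)
      also have "\<dots> = 0\<^sub>v n" using dpos by (intro eq_vecI) (auto simp: ones_def c_def)
      finally show "\<exists>v. v \<in> carrier_vec n \<and> v \<noteq> 0\<^sub>v n \<and> (1\<^sub>m n + M * \<Delta>0) *\<^sub>v v = 0\<^sub>v n"
        using onesc ne by blast
    qed
    have snD0: "spec_norm \<Delta>0 = 1 / d ^ m"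
    proof (rule antisym)
      show "spec_norm \<Delta>0 \<le> 1 / d ^ m"
      proof (rule opb_le)
        fix v :: "complex vec" assume "v \<in> carrier_vec (dim_col \<Delta>0)"
        hence v: "v \<in> carrier_vec n" by (simp add: \<Delta>0_def)
        show "vec_norm2 (\<Delta>0 *\<^sub>v v) \<le> 1 / d ^ m * vec_norm2 v"
          by (simp add: \<Delta>0_def smult_one_mv[OF v] nrm_smult cmodc)
      qed (use dpos in simp)
      have "vec_norm2 (\<Delta>0 *\<^sub>v ones n) \<le> spec_norm \<Delta>0 * vec_norm2 (ones n)"
        using onesc by (intro opb) (auto simp: \<Delta>0_def)
      hence "1 / d ^ m * sqrt (real n) \<le> spec_norm \<Delta>0 * sqrt (real n)"
        by (simp add: \<Delta>0_def smult_one_mv[OF onesc] nrm_smult cmodc ones_norm)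
      thus "1 / d ^ m \<le> spec_norm \<Delta>0" by (rule mult_right_le_imp_le[OF _ sqn])
    qed
    have low: "1 / d ^ m \<le> spec_norm \<Delta>" if "\<Delta> \<in> block_structure ks ns" "det (1\<^sub>m (dim_row M) + M * \<Delta>) = 0" for \<Delta>
    proof -
      have Dc': "\<Delta> \<in> carrier_mat n n" by (rule block_carrier[OF blk that(1)])
      have "1\<^sub>m n + M * \<Delta> \<in> carrier_mat n n" using Mc Dc' by simp
      from that(2)[unfolded dimM, unfolded det_0_iff_vec_prod_zero[OF this]]
      obtain x where x: "x \<in> carrier_vec n" "x \<noteq> 0\<^sub>v n" "(1\<^sub>m n + M * \<Delta>) *\<^sub>v x = 0\<^sub>v n" by blast
      have Dx: "\<Delta> *\<^sub>v x \<in> carrier_vec n" by (rule mult_mat_vec_carrier[OF Dc' x(1)])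
      have "(1\<^sub>m n + M * \<Delta>) *\<^sub>v x = 1\<^sub>m n *\<^sub>v x + (M * \<Delta>) *\<^sub>v x"
        using Mc Dc' x(1) by (intro add_mult_distrib_mat_vec[of _ n n]) auto
      also have "\<dots> = x + M *\<^sub>v (\<Delta> *\<^sub>v x)"
        by (simp only: one_mult_mat_vec[OF x(1)] assoc_mult_mat_vec[OF Mc Dc' x(1)])
      finally have eq0: "x + M *\<^sub>v (\<Delta> *\<^sub>v x) = 0\<^sub>v n" using x(3) by simp
      have "M *\<^sub>v (\<Delta> *\<^sub>v x) = - x"
      proof (rule eq_vecI)
        fix i assume "i < dim_vec (- x)" hence i: "i < n" using x(1) by simp
        have "(x + M *\<^sub>v (\<Delta> *\<^sub>v x)) $ i = 0" unfolding eq0 using i by simp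
        hence "x $ i + (M *\<^sub>v (\<Delta> *\<^sub>v x)) $ i = 0" using i x(1) Mc by simp
        thus "(M *\<^sub>v (\<Delta> *\<^sub>v x)) $ i = (- x) $ i" using i x(1)
          by (simp add: eq_neg_iff_add_eq_0 add.commute)
      qed (use Mc x(1) in simp)
      hence "vec_norm2 x = vec_norm2 (M *\<^sub>v (\<Delta> *\<^sub>v x))" by (simp add: nrm_uminus)
      also have "\<dots> \<le> d ^ m * vec_norm2 (\<Delta> *\<^sub>v x)" unfolding M_def by (rule Mop[OF Dx])
      also have "\<dots> \<le> d ^ m * (spec_norm \<Delta> * vec_norm2 x)"
        using opb[of x \<Delta>] Dc' x(1) dpos by (intro mult_left_mono) auto
      finally have le: "vec_norm2 x \<le> d ^ m * spec_norm \<Delta> * vec_norm2 x" by simp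
      have "vec_norm2 x \<noteq> 0" using x(1,2) nrm_zero_iff by auto
      hence xp: "vec_norm2 x > 0" by (simp add: vec_norm2_def sum_nonneg order_less_le)
      have "1 * vec_norm2 x \<le> (d ^ m * spec_norm \<Delta>) * vec_norm2 x" using le by simp
      hence "1 \<le> d ^ m * spec_norm \<Delta>" by (rule mult_right_le_imp_le[OF _ xp])
      thus ?thesis using dpos by (simp add: field_simps)
    qed
    have Inf: "Inf {spec_norm \<Delta> | \<Delta>. \<Delta> \<in> block_structure ks ns \<and> det (1\<^sub>m (dim_row M) + M * \<Delta>) = 0} = 1 / d ^ m"
      by (rule cInf_eq_minimum) (use D0B det0 snD0 low in \<open>auto intro!: exI[of _ \<Delta>0]\<close>)
    have "ssv (block_structure ks ns) M = inverse (1 / d ^ m)"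
      unfolding ssv_def Inf using D0B det0 by auto
    thus ?thesis using dpos by (simp add: M_def)
  qed
  show ?thesis using P1 P2 P3 unfolding S_def d_def by blast
qed

end
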